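(* Assume the setting of the context. There exists $N$ such that every walk of length at least $N$ in $G(\sigma)$ ends at a singleton vertex if and only if the sequence $x$ is periodic.
   Context: Let $\sigma:\mathcal A^*\to\mathcal A^*$ be a primitive substitution of constant length $l\ge2$ and $x\in\mathcal A^{\mathbb Z}$ an admissible two-sided fixed point of $\sigma$ (so $x_{lj+i}=\sigma(x_j)_i$, $w_i$ being the $i$-th letter of $w$ indexed from $0$); $x$ is not assumed non-periodic here. Height $h=\max\{n\ge1 : \gcd(n,l)=1,\ n\mid g_0\}$, $g_0=\gcd\{n\ge1:x_n=x_0\}$. For $0\le i<h$, $\mathcal A_i=\{x_{i+nh}:n\in\mathbb Z\}$. Graph $G(\sigma)$: vertices are subsets of $\mathcal A$; for a subset $\mathcal C$ and $0\le i<l$ there is an edge labelled $i$ from $\mathcal C$ to $\{\sigma(b)_i : b\in\mathcal C\}$; $G(\sigma)$ is restricted to vertices reachable from $\mathcal A_0,\dots,\mathcal A_{h-1}$. $x$ is periodic if $x_{n+q}=x_n$ for all $n$ for some $q\ge1$. *)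

theory Defs
  imports Main
begin

definition subst_word :: "('a \<Rightarrow> 'a list) \<Rightarrow> 'a list \<Rightarrow> 'a list" where
  "subst_word \<sigma> w = concat (map \<sigma> w)"

definition subst_iter :: "('a \<Rightarrow> 'a list) \<Rightarrow> nat \<Rightarrow> 'a \<Rightarrow> 'a list" where
  "subst_iter \<sigma> k a = (subst_word \<sigma> ^^ k) [a]"

definition constant_length :: "('a \<Rightarrow> 'a list) \<Rightarrow> nat \<Rightarrow> bool" where
  "constant_length \<sigma> l \<longleftrightarrow> (\<forall>a. length (\<sigma> a) = l)"

definition primitive :: "('a \<Rightarrow> 'a list) \<Rightarrow> bool" where
  "primitive \<sigma> \<longleftrightarrow> (\<exists>k\<ge>1. \<forall>a b. b \<in> set (subst_iter \<sigma> k a))"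

definition is_factor :: "'a list \<Rightarrow> 'a list \<Rightarrow> bool" where
  "is_factor w s \<longleftrightarrow> (\<exists>u v. s = u @ w @ v)"

definition in_language :: "('a \<Rightarrow> 'a list) \<Rightarrow> 'a list \<Rightarrow> bool" where
  "in_language \<sigma> w \<longleftrightarrow> (\<exists>k a. is_factor w (subst_iter \<sigma> k a))"

definition seq_word :: "(int \<Rightarrow> 'a) \<Rightarrow> int \<Rightarrow> nat \<Rightarrow> 'a list" where
  "seq_word x m n = map (\<lambda>k. x (m + int k)) [0..<n]"

definition two_sided_fixed_point :: "('a \<Rightarrow> 'a list) \<Rightarrow> nat \<Rightarrow> (int \<Rightarrow> 'a) \<Rightarrow> bool" where
  "two_sided_fixed_point \<sigma> l x \<longleftrightarrow>
     (\<forall>j::int. \<forall>i<l. x (int l * j + int i) = \<sigma> (x j) ! i)"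

definition admissible :: "('a \<Rightarrow> 'a list) \<Rightarrow> (int \<Rightarrow> 'a) \<Rightarrow> bool" where
  "admissible \<sigma> x \<longleftrightarrow> (\<forall>m n. in_language \<sigma> (seq_word x m n))"

definition g0 :: "(int \<Rightarrow> 'a) \<Rightarrow> nat" where
  "g0 x = Gcd {n::nat. n \<ge> 1 \<and> x (int n) = x 0}"

definition height :: "nat \<Rightarrow> (int \<Rightarrow> 'a) \<Rightarrow> nat" where
  "height l x = Max {n::nat. n \<ge> 1 \<and> gcd n l = 1 \<and> n dvd g0 x}"

definition letter_class :: "(int \<Rightarrow> 'a) \<Rightarrow> nat \<Rightarrow> nat \<Rightarrow> 'a set" where
  "letter_class x h i = {x (int i + n * int h) | n. True}"

definition edge_target :: "('a \<Rightarrow> 'a list) \<Rightarrow> nat \<Rightarrow> 'a set \<Rightarrow> 'a set" where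
  "edge_target \<sigma> i C = (\<lambda>b. \<sigma> b ! i) ` C"

inductive_set graph_vertices :: "('a \<Rightarrow> 'a list) \<Rightarrow> nat \<Rightarrow> (int \<Rightarrow> 'a) \<Rightarrow> 'a set set"
  for \<sigma> l x where
  base: "i < height l x \<Longrightarrow> letter_class x (height l x) i \<in> graph_vertices \<sigma> l x"
| step: "C \<in> graph_vertices \<sigma> l x \<Longrightarrow> i < l \<Longrightarrow> edge_target \<sigma> i C \<in> graph_vertices \<sigma> l x"

definition is_walk :: "('a \<Rightarrow> 'a list) \<Rightarrow> nat \<Rightarrow> (int \<Rightarrow> 'a) \<Rightarrow> 'a set list \<Rightarrow> bool" where
  "is_walk \<sigma> l x p \<longleftrightarrow> p \<noteq> [] \<and> set p \<subseteq> graph_vertices \<sigma> l x \<and>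
     (\<forall>k. Suc k < length p \<longrightarrow> (\<exists>i<l. p ! Suc k = edge_target \<sigma> i (p ! k)))"

definition walk_length :: "'a set list \<Rightarrow> nat" where
  "walk_length p = length p - 1"

definition periodic :: "(int \<Rightarrow> 'a) \<Rightarrow> bool" where
  "periodic x \<longleftrightarrow> (\<exists>q::int\<ge>1. \<forall>n. x (n + q) = x n)"

end

theory Submission imports Defs begin


lemma concat_nth_const:
  assumes "\<forall>a. length (\<sigma> a) = l" "r < length w" "j < l"
  shows "concat (map \<sigma> w) ! (l*r + j) = \<sigma> (w!r) ! j"
  using assms(2)
proof (induction w arbitrary: r)
  case Nil then show ?case by simp
next
  case (Cons a w)
  show ?case
  proof (cases r)
    case 0 then show ?thesis using assms by (simp add: nth_append)
  next
    case (Suc r')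
    have "l*r + j = l + (l*r'+j)" using Suc by simp
    then show ?thesis using Cons Suc assms by (simp add: nth_append)
  qed
qed

lemma length_concat_const: "\<forall>a. length (\<sigma> a) = l \<Longrightarrow> length (concat (map \<sigma> w)) = l * length w"
  by (induction w) auto

lemma subst_iter_Suc: "subst_iter \<sigma> (Suc k) a = concat (map \<sigma> (subst_iter \<sigma> k a))"
  by (simp add: subst_iter_def subst_word_def)

lemma subst_iter_0: "subst_iter \<sigma> 0 a = [a]"
  by (simp add: subst_iter_def)

lemma length_subst_iter: "constant_length \<sigma> l \<Longrightarrow> length (subst_iter \<sigma> k a) = l^k"
  by (induction k) (auto simp: subst_iter_Suc subst_iter_0 length_concat_const constant_length_def)

lemma fp_iter:
  assumes cl: "constant_length \<sigma> l" and fp: "two_sided_fixed_point \<sigma> l x" and l: "l > 0"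
  shows "r < l^k \<Longrightarrow> x (int (l^k) * j + int r) = subst_iter \<sigma> k (x j) ! r"
proof (induction k arbitrary: r)
  case 0 then show ?case by (simp add: subst_iter_0)
next
  case (Suc k)
  define r1 where "r1 = r div l"
  define j0 where "j0 = r mod l"
  have r: "r = l*r1 + j0" unfolding r1_def j0_def by simp
  have j0: "j0 < l" unfolding j0_def using l by simp
  have r1: "r1 < l^k" unfolding r1_def using Suc.prems
    by (simp add: less_mult_imp_div_less mult.commute)
  have e: "int (l^(Suc k)) * j + int r = int l * (int (l^k) * j + int r1) + int j0"
    using r by (simp add: algebra_simps)
  have "x (int (l^(Suc k)) * j + int r) = \<sigma> (x (int (l^k) * j + int r1)) ! j0"
    using fp j0 unfolding e two_sided_fixed_point_def by blast
  also have "\<dots> = \<sigma> (subst_iter \<sigma> k (x j) ! r1) ! j0" using Suc.IH r1 by simp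
  also have "\<dots> = concat (map \<sigma> (subst_iter \<sigma> k (x j))) ! (l*r1 + j0)"
    using concat_nth_const[of \<sigma> l r1 "subst_iter \<sigma> k (x j)" j0] cl r1 j0
    by (simp add: constant_length_def length_subst_iter)
  finally show ?case by (simp add: subst_iter_Suc r)
qed



definition isper :: "(int \<Rightarrow> 'a) \<Rightarrow> nat \<Rightarrow> bool" where
  "isper x t \<longleftrightarrow> (\<forall>m. x (m + int t) = x m)"

lemma isper_mult_nat: "isper x t \<Longrightarrow> x (m + int (c*t)) = x m"
proof (induction c arbitrary: m)
  case 0 then show ?case by simp
next
  case (Suc c)
  have "x (m + int (Suc c * t)) = x ((m + int (c*t)) + int t)" by (simp add: algebra_simps)
  also have "\<dots> = x (m + int (c*t))" using Suc.prems unfolding isper_def by blast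
  finally show ?case using Suc by simp
qed

lemma isper_mult_int: assumes "isper x t" shows "x (m + c * int t) = x m"
proof (cases "c \<ge> 0")
  case True
  define d where "d = nat c"
  have "c = int d" using True unfolding d_def by simp
  then show ?thesis using isper_mult_nat[OF assms, of m d] by simp
next
  case False
  define d where "d = nat (-c)"
  have d: "c = - int d" using False unfolding d_def by simp
  have "x ((m + c * int t) + int (d*t)) = x (m + c * int t)" using isper_mult_nat[OF assms] by blast
  then show ?thesis using d by simp
qed

lemma isper_gcd: assumes "isper x s" "isper x t" "s \<noteq> 0" shows "isper x (gcd s t)"
proof -
  obtain u v where uv: "s * u = t * v + gcd s t" using bezout_nat[OF assms(3)] by blast
  show ?thesis unfolding isper_def
  proof
    fix m
    have "x (m + int (gcd s t)) = x ((m + int (gcd s t)) + int (v*t))"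
      using isper_mult_nat[OF assms(2)] by simp
    also have "\<dots> = x (m + int (u*s))" using uv by (simp add: algebra_simps)
    also have "\<dots> = x m" using isper_mult_nat[OF assms(1)] by simp
    finally show "x (m + int (gcd s t)) = x m" .
  qed
qed

lemma split_coprime: "n > 0 \<Longrightarrow> \<exists>a b. n = a*b \<and> coprime a l \<and> b dvd l^n"
proof (induction n rule: less_induct)
  case (less n)
  show ?case
  proof (cases "coprime n l")
    case True then show ?thesis by (intro exI[of _ n] exI[of _ 1]) simp
  next
    case False
    define g where "g = gcd n l"
    have g1: "g > 1" using False less.prems unfolding g_def
      by (metis coprime_iff_gcd_eq_1 gcd_pos_nat less_one nat_neq_iff)
    obtain n' where n': "n = g * n'" unfolding g_def by (metis gcd_dvd1 dvdE)
    have n'pos: "n' > 0" using n' less.prems by (cases n') auto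
    have "n' < n" using n' g1 n'pos by simp
    then obtain a b where ab: "n' = a*b" "coprime a l" "b dvd l^n'" using less.IH n'pos by blast
    have "g * b dvd l * l^n'" using ab(3) unfolding g_def by (simp add: mult_dvd_mono)
    also have "l * l^n' dvd l^n" using \<open>n' < n\<close>
      by (metis Suc_leI le_imp_power_dvd power_Suc)
    finally show ?thesis using ab n' by (intro exI[of _ a] exI[of _ "g*b"]) (simp add: algebra_simps)
  qed
qed



definition progset :: "(int \<Rightarrow> 'a) \<Rightarrow> nat \<Rightarrow> nat \<Rightarrow> nat \<Rightarrow> nat \<Rightarrow> nat \<Rightarrow> 'a set" where
  "progset x l h k i r = {x (int (l^k) * (int i + n * int h) + int r) | n. True}"

lemma edge_progset:
  assumes fp: "two_sided_fixed_point \<sigma> l x" and j: "j < l"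
  shows "edge_target \<sigma> j (progset x l h k i r) = progset x l h (Suc k) i (l*r+j)"
proof -
  have "\<sigma> (x (int (l^k) * (int i + n * int h) + int r)) ! j
        = x (int (l^(Suc k)) * (int i + n * int h) + int (l*r+j))" for n
  proof -
    have e: "int (l^(Suc k)) * (int i + n * int h) + int (l*r+j)
        = int l * (int (l^k) * (int i + n * int h) + int r) + int j" by (simp add: algebra_simps)
    show ?thesis unfolding e using fp j unfolding two_sided_fixed_point_def by simp
  qed
  then have "(\<lambda>n. \<sigma> (x (int (l^k) * (int i + n * int h) + int r)) ! j)
        = (\<lambda>n. x (int (l^(Suc k)) * (int i + n * int h) + int (l*r+j)))" by (rule ext)
  moreover have "\<And>f::int\<Rightarrow>'a. {f n | n. True} = range f" by auto
  ultimately show ?thesis unfolding edge_target_def progset_def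
    by (simp only: image_comp comp_def)
qed

lemma letter_class_progset: "letter_class x h i = progset x l h 0 i 0"
  unfolding letter_class_def progset_def by simp

lemma vertex_rep:
  assumes fp: "two_sided_fixed_point \<sigma> l x"
  shows "C \<in> graph_vertices \<sigma> l x \<Longrightarrow> \<exists>k i r. i < height l x \<and> r < l^k \<and> C = progset x l (height l x) k i r"
proof (induction rule: graph_vertices.induct)
  case (base i)
  then show ?case by (intro exI[of _ 0] exI[of _ i] exI[of _ 0]) (simp add: letter_class_progset)
next
  case (step C j)
  then obtain k i r where kir: "i < height l x" "r < l^k" "C = progset x l (height l x) k i r" by blast
  have "l*r + j < l^(Suc k)"
  proof -
    have "l*r + j < l*(r+1)" using step by simp
    also have "\<dots> \<le> l * l^k" using kir(2) by (intro mult_le_mono2) simp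
    finally show ?thesis by simp
  qed
  then show ?case using kir edge_progset[OF fp \<open>j < l\<close>]
    by (intro exI[of _ "Suc k"] exI[of _ i] exI[of _ "l*r+j"]) simp
qed

lemma walk_rep:
  assumes fp: "two_sided_fixed_point \<sigma> l x" and w: "is_walk \<sigma> l x p"
  shows "idx < length p \<Longrightarrow> \<exists>k\<ge>idx. \<exists>i r. i < height l x \<and> r < l^k \<and> p!idx = progset x l (height l x) k i r"
proof (induction idx)
  case 0
  have "p!0 \<in> graph_vertices \<sigma> l x" using w 0 unfolding is_walk_def by (meson nth_mem subsetD)
  then show ?case using vertex_rep[OF fp] by blast
next
  case (Suc idx)
  then obtain k i r where kir: "k \<ge> idx" "i < height l x" "r < l^k" "p!idx = progset x l (height l x) k i r"
    by auto
  obtain j where j: "j < l" "p ! Suc idx = edge_target \<sigma> j (p ! idx)" using w Suc.prems unfolding is_walk_def by blast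
  have "l*r + j < l^(Suc k)"
  proof -
    have "l*r + j < l*(r+1)" using j by simp
    also have "\<dots> \<le> l * l^k" using kir(3) by (intro mult_le_mono2) simp
    finally show ?thesis by simp
  qed
  then show ?case using kir j edge_progset[OF fp j(1)]
    by (intro exI[of _ "Suc k"] conjI exI[of _ i] exI[of _ "l*r+j"]) simp_all
qed

lemma walk_exists:
  assumes fp: "two_sided_fixed_point \<sigma> l x" and l: "l > 0" and i: "i < height l x"
  shows "r < l^k \<Longrightarrow> \<exists>p. is_walk \<sigma> l x p \<and> length p = Suc k \<and> last p = progset x l (height l x) k i r"
proof (induction k arbitrary: r)
  case 0
  have "letter_class x (height l x) i \<in> graph_vertices \<sigma> l x" using i by (rule graph_vertices.base)
  then show ?case using 0 unfolding is_walk_def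
    by (intro exI[of _ "[letter_class x (height l x) i]"]) (simp add: letter_class_progset)
next
  case (Suc k)
  define r1 where "r1 = r div l"
  define j where "j = r mod l"
  have r: "r = l*r1 + j" unfolding r1_def j_def by simp
  have j: "j < l" unfolding j_def using l by simp
  have r1: "r1 < l^k" unfolding r1_def using Suc.prems
    by (simp add: less_mult_imp_div_less mult.commute)
  obtain p where p: "is_walk \<sigma> l x p" "length p = Suc k" "last p = progset x l (height l x) k i r1"
    using Suc.IH r1 by blast
  define p' where "p' = p @ [edge_target \<sigma> j (last p)]"
  have lastv: "last p \<in> graph_vertices \<sigma> l x" using p(1) unfolding is_walk_def by auto
  have "is_walk \<sigma> l x p'"
    unfolding is_walk_def
  proof (intro conjI allI impI)
    show "p' \<noteq> []" unfolding p'_def by simp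
    show "set p' \<subseteq> graph_vertices \<sigma> l x" using p(1) graph_vertices.step[OF lastv j]
      unfolding p'_def is_walk_def by auto
    fix kk assume kk: "Suc kk < length p'"
    show "\<exists>i<l. p' ! Suc kk = edge_target \<sigma> i (p' ! kk)"
    proof (cases "Suc kk < length p")
      case True
      then show ?thesis using p(1) unfolding is_walk_def p'_def by (simp add: nth_append)
    next
      case False
      then have "Suc kk = length p" using kk unfolding p'_def by simp
      have pne: "p \<noteq> []" using p(2) by auto
      have "p' ! Suc kk = edge_target \<sigma> j (last p)" unfolding p'_def using \<open>Suc kk = length p\<close> by (simp add: nth_append)
      moreover have "p' ! kk = last p" unfolding p'_def using \<open>Suc kk = length p\<close> pne
        by (simp add: nth_append last_conv_nth flip: \<open>Suc kk = length p\<close>)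
      ultimately have "p' ! Suc kk = edge_target \<sigma> j (last p)" "p' ! kk = last p" by auto
      then show ?thesis using j by metis
    qed
  qed
  moreover have "last p' = progset x l (height l x) (Suc k) i r"
    unfolding p'_def using edge_progset[OF fp j] p(3) r by simp
  ultimately show ?case using p(2) unfolding p'_def by auto
qed



theorem mainTheorem17:
  fixes \<sigma> :: "'a::finite \<Rightarrow> 'a list" and l :: nat and x :: "int \<Rightarrow> 'a"
  assumes "l \<ge> 2"
    and "constant_length \<sigma> l"
    and "primitive \<sigma>"
    and "two_sided_fixed_point \<sigma> l x"
    and "admissible \<sigma> x"
  shows "(\<exists>N. \<forall>p. is_walk \<sigma> l x p \<and> walk_length p \<ge> N \<longrightarrow> card (last p) = 1)
         \<longleftrightarrow> periodic x"
proof -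
  note l2 = assms(1) and cl = assms(2) and fp = assms(4)
  have l0: "l > 0" using l2 by simp
  define S where "S = {n::nat. n \<ge> 1 \<and> x (int n) = x 0}"
  define h where "h = height l x"
  define H where "H = {n::nat. n \<ge> 1 \<and> gcd n l = 1 \<and> n dvd g0 x}"
  have g0S: "g0 x = Gcd S" unfolding g0_def S_def by simp
  obtain k where k: "k \<ge> 1" "\<forall>a b. b \<in> set (subst_iter \<sigma> k a)"
    using assms(3) unfolding primitive_def by blast
  obtain r where r: "r < length (subst_iter \<sigma> k (x 1))" "subst_iter \<sigma> k (x 1) ! r = x 0"
    using k(2) by (meson in_set_conv_nth)
  have rl: "r < l^k" using r(1) length_subst_iter[OF cl] by simp
  have "x (int (l^k) * 1 + int r) = x 0" using fp_iter[OF cl fp l0 rl, where j=1] r(2) by simp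
  then have "l^k + r \<in> S" unfolding S_def using l0 by (simp add: Suc_le_eq)
  then have g0pos: "g0 x > 0" unfolding g0S
    by (metis Gcd_dvd S_def dvd_0_left_iff gr0I mem_Collect_eq not_one_le_zero)
  have finH: "finite H" unfolding H_def
    by (rule finite_subset[of _ "{..g0 x}"]) (auto intro: dvd_imp_le g0pos)
  have "1 \<in> H" unfolding H_def by simp
  then have hH: "h \<in> H" and hmax: "\<And>n. n \<in> H \<Longrightarrow> n \<le> h"
    unfolding h_def height_def H_def[symmetric] using finH by (auto intro: Max_in Max_ge)
  then have hpos: "h \<ge> 1" and hcop: "coprime h l" and hdvd: "h dvd g0 x"
    unfolding H_def by (auto simp: coprime_iff_gcd_eq_1)
  show ?thesis
  proof
    assume "\<exists>N. \<forall>p. is_walk \<sigma> l x p \<and> walk_length p \<ge> N \<longrightarrow> card (last p) = 1"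
    then obtain N where N: "\<And>p. is_walk \<sigma> l x p \<Longrightarrow> walk_length p \<ge> N \<Longrightarrow> card (last p) = 1" by blast
    define q where "q = l^N * h"
    have qpos: "q \<ge> 1" unfolding q_def using l0 hpos by simp
    have "x (m + int q) = x m" for m
    proof -
      define L where "L = int (l^N)"
      have Lpos: "L > 0" unfolding L_def using l0 by simp
      define M where "M = m div L"
      define rr where "rr = m mod L"
      define i where "i = M mod int h"
      define n where "n = M div int h"
      have rr: "0 \<le> rr" "rr < L" unfolding rr_def using Lpos by simp_all
      have i: "0 \<le> i" "i < int h" unfolding i_def using hpos by simp_all
      have m: "m = L * (i + n * int h) + rr" unfolding rr_def M_def i_def n_def
        by (metis div_mult_mod_eq mult.commute add.commute)
      have i': "nat i < h" using i by simp
      have rr': "nat rr < l^N" using rr unfolding L_def by (metis nat_less_iff of_nat_power)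
      obtain p where p: "is_walk \<sigma> l x p" "length p = Suc N" "last p = progset x l h N (nat i) (nat rr)"
        using walk_exists[OF fp l0, of "nat i" "nat rr" N] i' rr' unfolding h_def by auto
      have c: "card (progset x l h N (nat i) (nat rr)) = 1" using N[OF p(1)] p(2,3)
        unfolding walk_length_def by simp
      have "x m \<in> progset x l h N (nat i) (nat rr)"
        unfolding progset_def using m i rr L_def by auto
      moreover have "x (m + int q) \<in> progset x l h N (nat i) (nat rr)"
      proof -
        have "m + int q = int (l^N) * (int (nat i) + (n+1) * int h) + int (nat rr)"
          using m i rr unfolding L_def q_def by (simp add: algebra_simps)
        then show ?thesis unfolding progset_def by (intro CollectI exI[of _ "n+1"]) simp
      qed
      ultimately show ?thesis using c by (metis card_1_singletonE singletonD)
    qed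
    then show "periodic x" unfolding periodic_def using qpos
      by (intro exI[of _ "int q"]) simp
  next
    assume "periodic x"
    then obtain q :: int where q: "q \<ge> 1" "\<forall>n. x (n + q) = x n" unfolding periodic_def by blast
    have "isper x (nat q)" using q unfolding isper_def by simp
    define P where "P = (LEAST t. t \<ge> 1 \<and> isper x t)"
    have "P \<ge> 1 \<and> isper x P" unfolding P_def
      by (rule LeastI[of _ "nat q"]) (use q \<open>isper x (nat q)\<close> in simp)
    then have Ppos: "P \<ge> 1" and Pper: "isper x P" by auto
    have Pmin: "\<And>t. t \<ge> 1 \<Longrightarrow> isper x t \<Longrightarrow> P \<le> t" unfolding P_def by (simp add: Least_le)
    have Pdvd: "P dvd t" if "t \<ge> 1" "isper x t" for t
    proof -
      have "isper x (gcd P t)" using isper_gcd[OF Pper that(2)] Ppos by simp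
      moreover have "gcd P t \<ge> 1" using Ppos by (simp add: Suc_le_eq)
      ultimately have "P \<le> gcd P t" using Pmin by blast
      moreover have "gcd P t \<le> P" using Ppos by (simp add: gcd_le1_nat)
      ultimately have "gcd P t = P" by simp
      then show ?thesis by (metis gcd_dvd2)
    qed
    have PlP: "P < l^P"
    proof -
      have "P < 2^P" by (rule less_exp)
      also have "\<dots> \<le> l^P" using l2 by (rule power_mono) simp
      finally show ?thesis .
    qed
    have retper: "isper x (l^P * n)" if nS: "n \<in> S" for n
      unfolding isper_def
    proof
      fix m
      define s where "s = m mod int P"
      define c where "c = m div int P"
      have s: "0 \<le> s" "s < int P" unfolding s_def using Ppos by simp_all
      have m: "m = int (nat s) + c * int P" using s unfolding s_def c_def
        by (simp add: mult.commute)
      have sl: "nat s < l^P" using s PlP by simp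
      have xn: "x (int n) = x 0" using nS unfolding S_def by simp
      have "x (m + int (l^P * n)) = x ((int (l^P) * int n + int (nat s)) + c * int P)"
        using m by (simp add: algebra_simps)
      also have "\<dots> = x (int (l^P) * int n + int (nat s))" by (rule isper_mult_int[OF Pper])
      also have "\<dots> = subst_iter \<sigma> P (x 0) ! nat s" using fp_iter[OF cl fp l0 sl] xn by simp
      also have "\<dots> = x (int (l^P) * 0 + int (nat s))" using fp_iter[OF cl fp l0 sl, where j=0] by (simp only:)
      also have "\<dots> = x (int (nat s) + c * int P)" using isper_mult_int[OF Pper] by simp
      finally show "x (m + int (l^P * n)) = x m" using m by simp
    qed
    obtain a b where ab: "P = a*b" "coprime a l" "b dvd l^P" using split_coprime[of P l] Ppos by auto
    have "a dvd n" if "n \<in> S" for n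
    proof -
      have "P dvd l^P * n" using Pdvd retper[OF that] that l0 unfolding S_def by simp
      then have "a dvd l^P * n" using ab(1) by (metis dvd_mult_left)
      then show ?thesis using ab(2) by (simp add: coprime_dvd_mult_right_iff)
    qed
    then have adg: "a dvd g0 x" unfolding g0S by (rule Gcd_greatest)
    have apos: "a \<ge> 1" using ab(1) Ppos by (cases a) auto
    have "lcm a h \<in> H" unfolding H_def
    proof (intro CollectI conjI)
      show "lcm a h \<ge> 1" using apos hpos by (simp add: Suc_le_eq lcm_pos_nat)
      have "coprime (a*h) l" using ab(2) hcop by simp
      then have "coprime (lcm a h) l"  using coprime_divisors[of "lcm a h" "a*h" l l] lcm_least[of a "a*h" h] by simp
      then show "gcd (lcm a h) l = 1" by simp
      show "lcm a h dvd g0 x" using adg hdvd by simp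
    qed
    then have "lcm a h \<le> h" by (rule hmax)
    moreover have "h \<le> lcm a h" using apos hpos by (simp add: dvd_imp_le lcm_pos_nat)
    ultimately have "lcm a h = h" by simp
    then have adh: "a dvd h" by (metis dvd_lcm1)
    have PhL: "P dvd h * l^P" using ab(1) adh ab(3) by (simp add: mult_dvd_mono)
    show "\<exists>N. \<forall>p. is_walk \<sigma> l x p \<and> walk_length p \<ge> N \<longrightarrow> card (last p) = 1"
    proof (intro exI[of _ P] allI impI)
      fix p assume pw: "is_walk \<sigma> l x p \<and> walk_length p \<ge> P"
      have pne: "p \<noteq> []" using pw unfolding is_walk_def by simp
      obtain kk i rr where kir: "kk \<ge> length p - 1" "i < height l x" "rr < l^kk"
        "p ! (length p - 1) = progset x l (height l x) kk i rr"
        using walk_rep[OF fp, of p "length p - 1"] pw pne by auto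
      have kP: "kk \<ge> P" using kir(1) pw unfolding walk_length_def by simp
      have "l^P dvd l^kk" using kP by (rule le_imp_power_dvd)
      then have "P dvd h * l^kk" using PhL by (meson dvd_mult2 dvd_trans mult_dvd_mono dvd_refl)
      then obtain c where c: "l^kk * h = c * P" by (metis dvd_def mult.commute)
      have per: "isper x (l^kk * h)" unfolding isper_def c using isper_mult_nat[OF Pper] by blast
      have "progset x l h kk i rr = {x (int (l^kk) * int i + int rr)}"
      proof -
        have "x (int (l^kk) * (int i + n * int h) + int rr) = x (int (l^kk) * int i + int rr)" for n
        proof -
          have "int (l^kk) * (int i + n * int h) + int rr = (int (l^kk) * int i + int rr) + n * int (l^kk * h)"
            by (simp add: algebra_simps)
          then show ?thesis using isper_mult_int[OF per, of "int (l^kk) * int i + int rr" n] by (simp only:)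
        qed
        then show ?thesis unfolding progset_def by (auto intro: exI[of _ 0])
      qed
      then show "card (last p) = 1" using kir(4) pne unfolding h_def by (simp add: last_conv_nth)
    qed
  qed
qed


end
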